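(* Let $E$ be a (Hausdorff, real) topological vector space and $A\subseteq E\setminus\{0\}$. The following are equivalent: (i) the linear Kalton map $lK_A:lS_A\to E$ is continuous; (ii) the Kalton map $K_A:S_A\to E$ is continuous; (iii) the set $A$ is absolutely Cauchy summable.
   Context: For $a\in E$, $\langle a\rangle$ denotes the additive cyclic subgroup generated by $a$ and $\mathbb{R}a=\{ra:r\in\mathbb{R}\}$, both with the subspace topology. $S_A=\bigoplus_{a\in A}\langle a\rangle$ and $lS_A=\bigoplus_{a\in A}\mathbb{R}a$ denote the finitely supported elements of $\prod_{a\in A}\langle a\rangle$, resp. $\prod_{a\in A}\mathbb{R}a$, with the subspace topology of the Tychonoff product topology. The Kalton map $K_A:S_A\to E$ is the unique group homomorphism extending each inclusion $\langle a\rangle\to E$, and the linear Kalton map $lK_A:lS_A\to E$ is the unique linear map extending each inclusion $\mathbb{R}a\to E$. $A$ is absolutely Cauchy summable if for every neighbourhood $U$ of $0$ there is a finite $F\subseteq A$ such that the additive subgroup generated by $A\setminus F$ is contained in $U$. *)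

theory Defs
  imports "HOL-Analysis.Analysis"
begin

definition cyc :: "'a::real_vector \<Rightarrow> 'a set" where
  "cyc a = range (\<lambda>n::int. of_int n *\<^sub>R a)"

definition rline :: "'a::real_vector \<Rightarrow> 'a set" where
  "rline a = range (\<lambda>r::real. r *\<^sub>R a)"

text \<open>Finitely supported elements of the product over A of the sets C a
  (functions are extensional: undefined outside A, as in PiE / product_topology).\<close>
definition fin_supp :: "'a set \<Rightarrow> ('a \<Rightarrow> 'b::real_vector set) \<Rightarrow> ('a \<Rightarrow> 'b) set" where
  "fin_supp A C = {f \<in> PiE A C. finite {a \<in> A. f a \<noteq> 0}}"

definition S_top :: "'a::{real_vector,topological_space} set \<Rightarrow> ('a \<Rightarrow> 'a) topology" where
  "S_top A = subtopology (product_topology (\<lambda>a. top_of_set (cyc a)) A) (fin_supp A cyc)"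

definition lS_top :: "'a::{real_vector,topological_space} set \<Rightarrow> ('a \<Rightarrow> 'a) topology" where
  "lS_top A = subtopology (product_topology (\<lambda>a. top_of_set (rline a)) A) (fin_supp A rline)"

text \<open>The (linear) Kalton map: the homomorphism extending the inclusions,
  i.e. the sum of the (finitely many nonzero) coordinates.\<close>
definition kalton :: "'a set \<Rightarrow> ('a \<Rightarrow> 'a::real_vector) \<Rightarrow> 'a" where
  "kalton A f = (\<Sum>a\<in>{a \<in> A. f a \<noteq> 0}. f a)"

definition add_subgroup_gen :: "'a::ab_group_add set \<Rightarrow> 'a set" where
  "add_subgroup_gen B = \<Inter>{G. B \<subseteq> G \<and> 0 \<in> G \<and> (\<forall>x\<in>G. \<forall>y\<in>G. x + y \<in> G) \<and> (\<forall>x\<in>G. - x \<in> G)}"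

definition abs_cauchy_summable :: "'a::{real_vector,topological_space} set \<Rightarrow> bool" where
  "abs_cauchy_summable A \<longleftrightarrow>
     (\<forall>U. open U \<and> 0 \<in> U \<longrightarrow> (\<exists>F. finite F \<and> F \<subseteq> A \<and> add_subgroup_gen (A - F) \<subseteq> U))"

end

theory Submission
  imports Defs
begin

lemma asg_props:
  shows "B \<subseteq> add_subgroup_gen B" and "0 \<in> add_subgroup_gen B"
    and "x \<in> add_subgroup_gen B \<Longrightarrow> y \<in> add_subgroup_gen B \<Longrightarrow> x + y \<in> add_subgroup_gen B"
    and "x \<in> add_subgroup_gen B \<Longrightarrow> - x \<in> add_subgroup_gen B"
  unfolding add_subgroup_gen_def by auto

lemma asg_least:
  assumes "B \<subseteq> G" "0 \<in> G" "\<And>x y. x\<in>G \<Longrightarrow> y\<in>G \<Longrightarrow> x + y \<in> G" "\<And>x. x\<in>G \<Longrightarrow> - x \<in> G"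
  shows "add_subgroup_gen B \<subseteq> G"
  unfolding add_subgroup_gen_def
  by (intro Inter_lower CollectI conjI ballI assms)

lemma asg_nat_mult:
  fixes b :: "'a::real_vector"
  assumes "b \<in> B" shows "of_nat n *\<^sub>R b \<in> add_subgroup_gen B"
proof (induction n)
  case 0 then show ?case using asg_props(2) by simp
next
  case (Suc n)
  have "of_nat (Suc n) *\<^sub>R b = of_nat n *\<^sub>R b + b" by (simp add: algebra_simps)
  then show ?case using Suc asg_props(1,3) assms by (metis subsetD)
qed

lemma asg_int_mult:
  fixes b :: "'a::real_vector"
  assumes "b \<in> B" shows "of_int m *\<^sub>R b \<in> add_subgroup_gen B"
proof (cases "m \<ge> 0")
  case True
  then have "of_int m *\<^sub>R b = of_nat (nat m) *\<^sub>R b" by simp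
  then show ?thesis using asg_nat_mult[OF assms] by metis
next
  case False
  then have "of_int m *\<^sub>R b = - (of_nat (nat (-m)) *\<^sub>R b)" by simp
  then show ?thesis using asg_nat_mult[OF assms] asg_props(4) by metis
qed

lemma asg_sum:
  fixes B :: "'a::real_vector set"
  assumes "finite S" "S \<subseteq> B"
  shows "(\<Sum>a\<in>S. of_int (m a) *\<^sub>R a) \<in> add_subgroup_gen B"
  using assms
proof (induction S rule: finite_induct)
  case empty then show ?case using asg_props(2) by simp
next
  case (insert x F)
  then show ?case using asg_props(3)[OF asg_int_mult[of x B "m x"]] by simp
qed

lemma kalton_eq_sum:
  assumes "finite T" "T \<subseteq> A" "{a \<in> A. f a \<noteq> 0} \<subseteq> T"
  shows "kalton A f = sum f T"
  unfolding kalton_def using assms by (intro sum.mono_neutral_left) auto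

lemma S_top_eq: "S_top A = subtopology (lS_top A) (fin_supp A cyc)"
proof -
  have cr: "cyc a \<subseteq> rline a" for a :: 'a unfolding cyc_def rline_def by auto
  have fs: "fin_supp A cyc \<subseteq> fin_supp A rline" using cr unfolding fin_supp_def by (auto simp: PiE_iff)
  have fs2: "fin_supp A cyc = PiE A cyc \<inter> fin_supp A cyc" unfolding fin_supp_def by auto
  have tp: "subtopology (top_of_set (rline a)) (cyc a) = top_of_set (cyc a)" for a :: 'a
    using cr[of a] by (simp add: subtopology_subtopology Int_absorb1)
  have "subtopology (lS_top A) (fin_supp A cyc)
      = subtopology (product_topology (\<lambda>a. top_of_set (rline a)) A) (PiE A cyc \<inter> fin_supp A cyc)"
    unfolding lS_top_def subtopology_subtopology using fs fs2 by (metis Int_absorb1)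
  also have "\<dots> = subtopology (subtopology (product_topology (\<lambda>a. top_of_set (rline a)) A) (PiE A cyc)) (fin_supp A cyc)"
    by (simp add: subtopology_subtopology)
  also have "\<dots> = S_top A"
    unfolding subtopology_product_topology tp S_top_def ..
  finally show ?thesis by simp
qed

lemma ii_iii:
  fixes A :: "'a::{real_vector,topological_space} set"
  assumes K: "continuous_map (S_top A) euclidean (kalton A)" and A: "A \<subseteq> UNIV - {0}"
  shows "abs_cauchy_summable A"
  unfolding abs_cauchy_summable_def
proof (intro allI impI)
  fix U :: "'a set" assume U: "open U \<and> 0 \<in> U"
  define P where "P = product_topology (\<lambda>a. top_of_set (cyc a)) A"
  have c0: "0 \<in> cyc a" for a :: 'a unfolding cyc_def by (auto intro: range_eqI[of _ _ 0])
  have tsp: "topspace (S_top A) = fin_supp A cyc"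
    unfolding S_top_def fin_supp_def by auto
  have "openin (S_top A) {x \<in> fin_supp A cyc. kalton A x \<in> U}"
    using K U unfolding continuous_map_def tsp by auto
  then obtain Op where Op: "openin P Op" "{x \<in> fin_supp A cyc. kalton A x \<in> U} = Op \<inter> fin_supp A cyc"
    unfolding S_top_def P_def openin_subtopology by blast
  define z where "z = restrict (\<lambda>_. 0::'a) A"
  have z: "z \<in> fin_supp A cyc" unfolding z_def fin_supp_def using c0 by auto
  have "{a \<in> A. z a \<noteq> 0} = {}" unfolding z_def by auto
  then have "kalton A z = 0" unfolding kalton_def by (simp only: sum.empty)
  then have "z \<in> {x \<in> fin_supp A cyc. kalton A x \<in> U}" using z U by simp
  then have "z \<in> Op \<inter> fin_supp A cyc" unfolding Op(2) .
  then have "z \<in> Op" by (rule IntD1)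
  then obtain V where V: "finite {i \<in> A. V i \<noteq> cyc i}" "\<forall>i\<in>A. openin (top_of_set (cyc i)) (V i)"
      "z \<in> PiE A V" "PiE A V \<subseteq> Op"
  proof -
    have "\<forall>x\<in>Op. \<exists>V. finite {i \<in> A. V i \<noteq> topspace (top_of_set (cyc i))} \<and>
        (\<forall>i\<in>A. openin (top_of_set (cyc i)) (V i)) \<and> x \<in> PiE A V \<and> PiE A V \<subseteq> Op"
      using Op(1) unfolding P_def openin_product_topology_alt .
    then obtain V where "finite {i \<in> A. V i \<noteq> topspace (top_of_set (cyc i))}"
        "\<forall>i\<in>A. openin (top_of_set (cyc i)) (V i)" "z \<in> PiE A V" "PiE A V \<subseteq> Op"
      using \<open>z \<in> Op\<close> by blast
    then show ?thesis using that by simp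
  qed
  define F where "F = {i \<in> A. V i \<noteq> cyc i}"
  define H where "H = {g \<in> fin_supp A cyc. \<forall>a\<in>F. g a = 0}"
  have HU: "kalton A g \<in> U" if "g \<in> H" for g
  proof -
    have "g \<in> PiE A V"
    proof -
      have "g \<in> PiE A cyc" using that unfolding H_def fin_supp_def by auto
      moreover have "g a \<in> V a" if "a \<in> A" "g \<in> PiE A cyc" "\<forall>a\<in>F. g a = 0" for a
      proof (cases "a \<in> F")
        case True
        then show ?thesis using that V(3) unfolding z_def by (auto simp: PiE_iff)
      next
        case False
        then show ?thesis using that unfolding F_def by (auto simp: PiE_iff)
      qed
      ultimately show ?thesis using \<open>g \<in> H\<close> unfolding H_def by (auto simp: PiE_iff)
    qed
    then have "g \<in> Op" using V(4) by blast
    moreover have "g \<in> fin_supp A cyc" using that unfolding H_def by blast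
    ultimately have "g \<in> Op \<inter> fin_supp A cyc" by (rule IntI)
    then have "g \<in> {x \<in> fin_supp A cyc. kalton A x \<in> U}" unfolding Op(2) .
    then show ?thesis by simp
  qed
  have cplus: "x + y \<in> cyc a" if xy: "x \<in> cyc a" "y \<in> cyc a" for x y a
  proof -
    obtain n m :: int where "x = of_int n *\<^sub>R a" "y = of_int m *\<^sub>R a" using xy unfolding cyc_def by auto
    then have "x + y = of_int (n + m) *\<^sub>R a" by (simp add: scaleR_add_left)
    then show ?thesis unfolding cyc_def by (rule ssubst) (rule rangeI)
  qed
  have cneg: "- x \<in> cyc a" if xc: "x \<in> cyc a" for x a
  proof -
    obtain n :: int where "x = of_int n *\<^sub>R a" using xc unfolding cyc_def by auto
    then have "- x = of_int (- n) *\<^sub>R a" by simp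
    then show ?thesis unfolding cyc_def by (rule ssubst) (rule rangeI)
  qed
  have "add_subgroup_gen (A - F) \<subseteq> kalton A ` H"
  proof (rule asg_least)
    show "A - F \<subseteq> kalton A ` H"
    proof
      fix b assume b: "b \<in> A - F"
      define g where "g = restrict (\<lambda>a. if a = b then b else 0) A"
      have "b \<in> cyc b" unfolding cyc_def by (auto intro: range_eqI[of _ _ 1])
      then have "g \<in> H" using b c0 unfolding H_def g_def fin_supp_def by (auto simp: PiE_iff F_def)
      moreover have "{a \<in> A. g a \<noteq> 0} = {b}" using b A unfolding g_def by auto
      then have "kalton A g = b" unfolding kalton_def g_def using b by simp
      ultimately show "b \<in> kalton A ` H" by (metis image_eqI)
    qed
    show "0 \<in> kalton A ` H"
    proof -
      have "z \<in> H" using z unfolding H_def z_def by (auto simp: F_def)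
      then show ?thesis using \<open>kalton A z = 0\<close> by (metis image_eqI)
    qed
  next
    fix x y assume "x \<in> kalton A ` H" "y \<in> kalton A ` H"
    then obtain g1 g2 where g: "g1 \<in> H" "g2 \<in> H" "x = kalton A g1" "y = kalton A g2" by auto
    define g where "g = restrict (\<lambda>a. g1 a + g2 a) A"
    define T where "T = {a \<in> A. g1 a \<noteq> 0} \<union> {a \<in> A. g2 a \<noteq> 0}"
    have T: "finite T" "T \<subseteq> A" using g unfolding T_def H_def fin_supp_def by auto
    have g12: "g1 \<in> PiE A cyc" "g2 \<in> PiE A cyc" "\<forall>a\<in>F. g1 a = 0" "\<forall>a\<in>F. g2 a = 0"
      using g(1,2) unfolding H_def fin_supp_def by auto
    have "g \<in> PiE A cyc" unfolding g_def using g12(1,2) by (auto simp: PiE_iff intro!: cplus)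
    moreover have "{a \<in> A. g a \<noteq> 0} \<subseteq> T" unfolding T_def g_def by auto
    then have "finite {a \<in> A. g a \<noteq> 0}" using T(1) by (rule finite_subset)
    moreover have "\<forall>a\<in>F. g a = 0" using g12(3,4) unfolding g_def F_def by simp
    ultimately have "g \<in> H" unfolding H_def fin_supp_def by blast
    moreover have "kalton A g = x + y"
    proof -
      have "kalton A g = sum g T" by (rule kalton_eq_sum) (use T in \<open>auto simp: T_def g_def\<close>)
      also have "\<dots> = sum g1 T + sum g2 T" using T(2) unfolding g_def by (simp add: sum.distrib subset_iff)
      also have "sum g1 T = x" unfolding g(3) by (rule kalton_eq_sum[symmetric]) (use T in \<open>auto simp: T_def\<close>)
      also have "sum g2 T = y" unfolding g(4) by (rule kalton_eq_sum[symmetric]) (use T in \<open>auto simp: T_def\<close>)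
      finally show ?thesis .
    qed
    ultimately show "x + y \<in> kalton A ` H" by (metis image_eqI)
  next
    fix x assume "x \<in> kalton A ` H"
    then obtain g1 where g: "g1 \<in> H" "x = kalton A g1" by auto
    define g where "g = restrict (\<lambda>a. - g1 a) A"
    define T where "T = {a \<in> A. g1 a \<noteq> 0}"
    have T: "finite T" "T \<subseteq> A" using g unfolding T_def H_def fin_supp_def by auto
    have g12: "g1 \<in> PiE A cyc" "\<forall>a\<in>F. g1 a = 0"
      using g(1) unfolding H_def fin_supp_def by auto
    have "g \<in> PiE A cyc" unfolding g_def using g12(1) by (auto simp: PiE_iff intro!: cneg)
    moreover have "{a \<in> A. g a \<noteq> 0} \<subseteq> T" unfolding T_def g_def by auto
    then have "finite {a \<in> A. g a \<noteq> 0}" using T(1) by (rule finite_subset)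
    moreover have "\<forall>a\<in>F. g a = 0" using g12(2) unfolding g_def F_def by simp
    ultimately have "g \<in> H" unfolding H_def fin_supp_def by blast
    moreover have "kalton A g = - x"
    proof -
      have "kalton A g = sum g T" by (rule kalton_eq_sum) (use T in \<open>auto simp: T_def g_def\<close>)
      also have "\<dots> = - sum g1 T" using T(2) unfolding g_def by (simp add: sum_negf subset_iff)
      also have "sum g1 T = x" unfolding g(2) by (rule kalton_eq_sum[symmetric]) (use T in \<open>auto simp: T_def\<close>)
      finally show ?thesis .
    qed
    ultimately show "- x \<in> kalton A ` H" by (metis image_eqI)
  qed
  then have "add_subgroup_gen (A - F) \<subseteq> U" using HU by blast
  moreover have "finite F" "F \<subseteq> A" using V(1) unfolding F_def by auto
  ultimately show "\<exists>F. finite F \<and> F \<subseteq> A \<and> add_subgroup_gen (A - F) \<subseteq> U" by blast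
qed

lemma open_vimage_UNIV:
  assumes "continuous_on UNIV f" "open B"
  shows "open (f -` B)"
proof -
  have "\<forall>B. open B \<longrightarrow> open (f -` B \<inter> UNIV)"
    using iffD1[OF continuous_on_open_vimage[OF open_UNIV] assms(1)] .
  then have "open (f -` B \<inter> UNIV)" using assms(2) by blast
  then show ?thesis by simp
qed

context
  fixes dummy :: "'a::{real_vector,t2_space}"
  assumes add_cont: "continuous_on UNIV (\<lambda>p::'a \<times> 'a. fst p + snd p)"
    and smult_cont: "continuous_on UNIV (\<lambda>p::real \<times> 'a. fst p *\<^sub>R snd p)"
begin

lemma lem_add:
  fixes U :: "'a set"
  assumes "open U" "0 \<in> U"
  obtains V1 V2 where "open V1" "open V2" "0 \<in> V1" "0 \<in> V2" "\<And>x y. x\<in>V1 \<Longrightarrow> y\<in>V2 \<Longrightarrow> x+y\<in>U"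
proof -
  have "open ((\<lambda>p::'a \<times> 'a. fst p + snd p) -` U)"
    by (rule open_vimage_UNIV[OF add_cont assms(1)])
  moreover have "(0,0) \<in> (\<lambda>p::'a \<times> 'a. fst p + snd p) -` U" using assms by simp
  ultimately obtain V1 V2 where V: "open V1" "open V2" "(0,0) \<in> V1 \<times> V2"
     "V1 \<times> V2 \<subseteq> (\<lambda>p::'a \<times> 'a. fst p + snd p) -` U" by (rule open_prod_elim)
  have "x + y \<in> U" if "x \<in> V1" "y \<in> V2" for x y
  proof -
    have "(x, y) \<in> V1 \<times> V2" using that by simp
    then have "(x, y) \<in> (\<lambda>p::'a \<times> 'a. fst p + snd p) -` U" by (rule subsetD[OF V(4)])
    then show ?thesis by simp
  qed
  moreover have "0 \<in> V1" "0 \<in> V2" using V(3) by auto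
  ultimately show ?thesis using that[OF V(1,2)] by blast
qed

lemma lem_scal:
  fixes U :: "'a set"
  assumes "open U" "0 \<in> U"
  obtains d W where "d > 0" "open W" "0 \<in> W" "\<And>t x. \<bar>t\<bar> < d \<Longrightarrow> x\<in>W \<Longrightarrow> t *\<^sub>R x \<in> U"
proof -
  have "open ((\<lambda>p::real \<times> 'a. fst p *\<^sub>R snd p) -` U)"
    by (rule open_vimage_UNIV[OF smult_cont assms(1)])
  moreover have "(0,0) \<in> (\<lambda>p::real \<times> 'a. fst p *\<^sub>R snd p) -` U" using assms by simp
  ultimately obtain V1 V2 where V: "open V1" "open V2" "(0,0) \<in> V1 \<times> V2"
     "V1 \<times> V2 \<subseteq> (\<lambda>p::real \<times> 'a. fst p *\<^sub>R snd p) -` U" by (rule open_prod_elim)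
  have "0 \<in> V1" using V(3) by simp
  then obtain d where d: "d > 0" "ball 0 d \<subseteq> V1"
    using V(1) open_contains_ball by blast
  have "t *\<^sub>R x \<in> U" if "\<bar>t\<bar> < d" "x \<in> V2" for t x
  proof -
    have "t \<in> ball 0 d" using that(1) by (simp add: dist_real_def)
    then have "(t, x) \<in> V1 \<times> V2" using d(2) that(2) by auto
    then have "(t, x) \<in> (\<lambda>p::real \<times> 'a. fst p *\<^sub>R snd p) -` U" by (rule subsetD[OF V(4)])
    then show ?thesis by simp
  qed
  moreover have "0 \<in> V2" using V(3) by simp
  ultimately show ?thesis using that[OF d(1) V(2)] by blast
qed

lemma cont_scale: "continuous_on UNIV (\<lambda>x::'a. c *\<^sub>R x)"
proof -
  have "continuous_on UNIV (\<lambda>x::'a. (c, x))" by (intro continuous_intros)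
  from continuous_on_compose[OF this, of "\<lambda>p::real \<times> 'a. fst p *\<^sub>R snd p"] smult_cont
  show ?thesis by (simp add: o_def continuous_on_subset)
qed

lemma cont_line: "continuous_on UNIV (\<lambda>t::real. t *\<^sub>R (a::'a))"
proof -
  have "continuous_on UNIV (\<lambda>t::real. (t, a))" by (intro continuous_intros)
  from continuous_on_compose[OF this, of "\<lambda>p::real \<times> 'a. fst p *\<^sub>R snd p"] smult_cont
  show ?thesis by (simp add: o_def continuous_on_subset)
qed

lemma cont_transl: "continuous_on UNIV (\<lambda>x::'a. x + c)"
proof -
  have "continuous_on UNIV (\<lambda>x::'a. (x, c))" by (intro continuous_intros)
  from continuous_on_compose[OF this, of "\<lambda>p::'a \<times> 'a. fst p + snd p"] add_cont
  show ?thesis by (simp add: o_def continuous_on_subset)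
qed

lemma open_transl: "open (U::'a set) \<Longrightarrow> open {x. x + c \<in> U}"
  using open_vimage_UNIV[OF cont_transl[of c], of U] by (simp add: vimage_def)


lemma lem_bal:
  fixes U :: "'a set"
  assumes "open U" "0 \<in> U"
  obtains W where "open W" "0 \<in> W" "\<And>t x. \<bar>t\<bar> \<le> 1 \<Longrightarrow> x\<in>W \<Longrightarrow> t *\<^sub>R x \<in> U"
proof -
  obtain d W0 where d: "d > 0" "open W0" "0 \<in> W0" "\<And>t x. \<bar>t\<bar> < d \<Longrightarrow> x\<in>W0 \<Longrightarrow> t *\<^sub>R x \<in> U"
    using lem_scal[OF assms] by blast
  define W where "W = (\<lambda>x. (2/d) *\<^sub>R x) -` W0 \<inter> UNIV"
  have "open W" unfolding W_def using open_vimage_UNIV[OF cont_scale[of "2/d"] d(2)] by simp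
  moreover have "0 \<in> W" using d(3) by (simp add: W_def)
  moreover have "t *\<^sub>R x \<in> U" if "\<bar>t\<bar> \<le> 1" "x \<in> W" for t x
  proof -
    have e: "t *\<^sub>R x = (t*d/2) *\<^sub>R ((2/d) *\<^sub>R x)" using d(1) by simp
    have ab: "\<bar>t*d/2\<bar> < d" using d(1) that(1) by (simp add: abs_mult)
    have w: "(2/d) *\<^sub>R x \<in> W0" using that(2) by (simp add: W_def)
    show ?thesis unfolding e by (rule d(4)[OF ab w])
  qed
  ultimately show ?thesis by (rule that)
qed

lemma lem_sumW:
  fixes F :: "'b set"
  assumes "finite F"
  shows "open U \<Longrightarrow> 0 \<in> (U::'a set) \<Longrightarrow> \<exists>W. open W \<and> 0 \<in> W \<and> (\<forall>h. (\<forall>a\<in>F. h a \<in> W) \<longrightarrow> sum h F \<in> U)"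
  using assms
proof (induction F arbitrary: U rule: finite_induct)
  case empty
  then show ?case by (intro exI[of _ UNIV]) auto
next
  case (insert x F)
  obtain V1 V2 where V: "open V1" "open V2" "0 \<in> V1" "0 \<in> V2" "\<And>x y. x\<in>V1 \<Longrightarrow> y\<in>V2 \<Longrightarrow> x+y\<in>U"
    using lem_add[OF insert.prems(1,2)] by blast
  obtain W2 where W2: "open W2" "0 \<in> W2" "\<forall>h. (\<forall>a\<in>F. h a \<in> W2) \<longrightarrow> sum h F \<in> V2"
    using insert.IH[OF V(2,4)] by blast
  show ?case
  proof (intro exI[of _ "V1 \<inter> W2"] conjI allI impI)
    show "open (V1 \<inter> W2)" using V W2 by auto
    show "0 \<in> V1 \<inter> W2" using V W2 by auto
    fix h assume h: "\<forall>a\<in>insert x F. h a \<in> V1 \<inter> W2"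
    then have "h x \<in> V1" "sum h F \<in> V2" using W2 by auto
    then show "sum h (insert x F) \<in> U" using V(5) insert.hyps by simp
  qed
qed

lemma lem_sumSmall:
  fixes S :: "'a set"
  assumes "finite S"
  shows "open U \<Longrightarrow> 0 \<in> (U::'a set) \<Longrightarrow> \<exists>d>0. \<forall>c. (\<forall>a\<in>S. \<bar>c a\<bar> < d) \<longrightarrow> (\<Sum>a\<in>S. c a *\<^sub>R a) \<in> U"
  using assms
proof (induction S arbitrary: U rule: finite_induct)
  case empty
  then show ?case by (intro exI[of _ 1]) auto
next
  case (insert x F)
  obtain V1 V2 where V: "open V1" "open V2" "0 \<in> V1" "0 \<in> V2" "\<And>x y. x\<in>V1 \<Longrightarrow> y\<in>V2 \<Longrightarrow> x+y\<in>U"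
    using lem_add[OF insert.prems(1,2)] by blast
  obtain d2 where d2: "d2 > 0" "\<forall>c. (\<forall>a\<in>F. \<bar>c a\<bar> < d2) \<longrightarrow> (\<Sum>a\<in>F. c a *\<^sub>R a) \<in> V2"
    using insert.IH[OF V(2,4)] by blast
  have "open ((\<lambda>t::real. t *\<^sub>R x) -` V1)"
    by (rule open_vimage_UNIV[OF cont_line V(1)])
  moreover have "(0::real) \<in> (\<lambda>t::real. t *\<^sub>R x) -` V1" using V(3) by simp
  ultimately obtain d1 where d1: "d1 > 0" "ball 0 d1 \<subseteq> (\<lambda>t::real. t *\<^sub>R x) -` V1"
    using open_contains_ball by blast
  show ?case
  proof (intro exI[of _ "min d1 d2"] conjI allI impI)
    show "min d1 d2 > 0" using d1 d2 by simp
    fix c assume c: "\<forall>a\<in>insert x F. \<bar>c a\<bar> < min d1 d2"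
    have "\<bar>c x\<bar> < d1" using c by simp
    then have "c x \<in> ball 0 d1" by (simp add: dist_real_def)
    then have "c x \<in> (\<lambda>t::real. t *\<^sub>R x) -` V1" by (rule subsetD[OF d1(2)])
    then have "c x *\<^sub>R x \<in> V1" by simp
    moreover have "\<forall>a\<in>F. \<bar>c a\<bar> < d2" using c by simp
    then have "(\<Sum>a\<in>F. c a *\<^sub>R a) \<in> V2" using d2(2) by blast
    ultimately show "(\<Sum>a\<in>insert x F. c a *\<^sub>R a) \<in> U" using V(5) insert.hyps by simp
  qed
qed

lemma lem_span:
  fixes V2 V3 V4 W3 :: "'a set"
  assumes "open V4" "0 \<in> V4" "\<And>x y. x\<in>V3 \<Longrightarrow> y\<in>V4 \<Longrightarrow> x+y \<in> V2"
    and "\<And>t x. \<bar>t\<bar> \<le> 1 \<Longrightarrow> x\<in>W3 \<Longrightarrow> t *\<^sub>R x \<in> V3"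
    and "add_subgroup_gen B \<subseteq> W3" "finite S" "S \<subseteq> B"
  shows "(\<Sum>a\<in>S. r a *\<^sub>R a) \<in> V2"
proof -
  obtain d where d: "d > 0" "\<forall>c. (\<forall>a\<in>S. \<bar>c a\<bar> < d) \<longrightarrow> (\<Sum>a\<in>S. c a *\<^sub>R a) \<in> V4"
    using lem_sumSmall[OF assms(6,1,2)] by blast
  define N where "N = real (nat \<lceil>1/d\<rceil> + 1)"
  have N1: "N \<ge> 1" unfolding N_def by simp
  have Nd: "1/N < d"
  proof -
    have "1/d < N" unfolding N_def by linarith
    then show ?thesis using d(1) N1 by (simp add: field_simps)
  qed
  define m where "m a = \<lfloor>N * r a\<rfloor>" for a
  define th where "th a = N * r a - of_int (m a)" for a
  have th: "0 \<le> th a" "th a < 1" for a unfolding th_def m_def by linarith+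
  have eq: "r a *\<^sub>R a = (1/N) *\<^sub>R (of_int (m a) *\<^sub>R a) + (th a / N) *\<^sub>R a" for a
  proof -
    have "r a = (1/N) * of_int (m a) + th a / N" unfolding th_def using N1 by (simp add: field_simps)
    then show ?thesis by (simp add: scaleR_add_left)
  qed
  have "(\<Sum>a\<in>S. r a *\<^sub>R a) = (1/N) *\<^sub>R (\<Sum>a\<in>S. of_int (m a) *\<^sub>R a) + (\<Sum>a\<in>S. (th a / N) *\<^sub>R a)"
    by (simp add: eq sum.distrib scaleR_sum_right)
  moreover have "(1/N) *\<^sub>R (\<Sum>a\<in>S. of_int (m a) *\<^sub>R a) \<in> V3"
    using assms(4)[of "1/N"] asg_sum[OF assms(6,7), of m] assms(5) N1 by auto
  moreover have "(\<Sum>a\<in>S. (th a / N) *\<^sub>R a) \<in> V4"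
  proof -
    have thd: "\<bar>th a / N\<bar> < d" for a
    proof -
      have "\<bar>th a / N\<bar> = th a / N" using th N1 by simp
      also have "\<dots> < 1 / N" using th N1 by (simp add: divide_strict_right_mono)
      finally show ?thesis using Nd by linarith
    qed
    then show ?thesis using d(2)[rule_format, of "\<lambda>a. th a / N"] by blast
  qed
  ultimately show ?thesis using assms(3) by simp
qed

lemma iii_i:
  fixes A :: "'a set"
  assumes acs: "abs_cauchy_summable A"
  shows "continuous_map (lS_top A) euclidean (kalton A)"
proof -
  have tsp: "topspace (lS_top A) = fin_supp A rline"
    unfolding lS_top_def fin_supp_def by auto
  have "openin (lS_top A) {x \<in> fin_supp A rline. kalton A x \<in> U}" if "open U" for U
  proof (subst openin_subopen, intro ballI)
    fix f assume "f \<in> {x \<in> fin_supp A rline. kalton A x \<in> U}"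
    then have f: "f \<in> fin_supp A rline" "kalton A f \<in> U" by auto
    define U0 where "U0 = {y. y + kalton A f \<in> U}"
    have U0: "open U0" "0 \<in> U0" unfolding U0_def using open_transl[OF \<open>open U\<close>] f(2) by auto
    obtain V1 V2 where V: "open V1" "open V2" "0 \<in> V1" "0 \<in> V2" "\<And>x y. x\<in>V1 \<Longrightarrow> y\<in>V2 \<Longrightarrow> x+y\<in>U0"
      using lem_add[OF U0] by blast
    obtain V3 V4 where V': "open V3" "open V4" "0 \<in> V3" "0 \<in> V4" "\<And>x y. x\<in>V3 \<Longrightarrow> y\<in>V4 \<Longrightarrow> x+y\<in>V2"
      using lem_add[OF V(2,4)] by blast
    obtain W3 where W3: "open W3" "0 \<in> W3" "\<And>t x. \<bar>t\<bar> \<le> 1 \<Longrightarrow> x\<in>W3 \<Longrightarrow> t *\<^sub>R x \<in> V3"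
      using lem_bal[OF V'(1,3)] by blast
    obtain F where F: "finite F" "F \<subseteq> A" "add_subgroup_gen (A - F) \<subseteq> W3"
      using acs W3(1,2) unfolding abs_cauchy_summable_def by blast
    obtain W1 where W1: "open W1" "0 \<in> W1" "\<forall>h. (\<forall>a\<in>F. h a \<in> W1) \<longrightarrow> sum h F \<in> V1"
      using lem_sumW[OF F(1) V(1,3)] by blast
    define Vv where "Vv a = (if a \<in> F then rline a \<inter> {x. x - f a \<in> W1} else rline a)" for a
    define T where "T = {g \<in> fin_supp A rline. \<forall>a\<in>F. g a - f a \<in> W1}"
    have TE: "T = PiE A Vv \<inter> fin_supp A rline"
    proof (intro set_eqI iffI)
      fix g assume g: "g \<in> PiE A Vv \<inter> fin_supp A rline"
      have "g a - f a \<in> W1" if "a \<in> F" for a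
      proof -
        have "a \<in> A" using that F(2) by blast
        moreover have "g \<in> PiE A Vv" using g by blast
        ultimately have "g a \<in> Vv a" by (simp add: PiE_mem)
        then show ?thesis using that by (simp add: Vv_def)
      qed
      then show "g \<in> T" using g unfolding T_def by blast
    next
      fix g assume g: "g \<in> T"
      then have g1: "g \<in> PiE A rline" unfolding T_def fin_supp_def by blast
      have "g a \<in> Vv a" if "a \<in> A" for a
        using g g1 that unfolding T_def Vv_def by (auto simp: PiE_mem)
      then have "g \<in> PiE A Vv" using g1 by (simp add: PiE_iff)
      then show "g \<in> PiE A Vv \<inter> fin_supp A rline" using g unfolding T_def by blast
    qed
    have "openin (product_topology (\<lambda>a. top_of_set (rline a)) A) (PiE A Vv)"
    proof -
      have "finite {i \<in> A. Vv i \<noteq> topspace (top_of_set (rline i))}"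
        by (rule finite_subset[OF _ F(1)]) (auto simp: Vv_def)
      moreover have "openin (top_of_set (rline i)) (Vv i)" for i
      proof (cases "i \<in> F")
        case True
        then show ?thesis unfolding Vv_def using openin_open_Int open_transl[OF W1(1), of "- f i"] by simp
      next
        case False
        then show ?thesis unfolding Vv_def by simp
      qed
      ultimately show ?thesis by (simp add: openin_PiE_gen)
    qed
    then have "openin (lS_top A) T" unfolding TE lS_top_def by (rule openin_subtopology_Int)
    moreover have "f \<in> T" unfolding T_def using f W1(2) by auto
    moreover have "T \<subseteq> {x \<in> fin_supp A rline. kalton A x \<in> U}"
    proof
      fix g assume "g \<in> T"
      then have g: "g \<in> fin_supp A rline" "\<forall>a\<in>F. g a - f a \<in> W1" unfolding T_def by auto
      define T' where "T' = {a \<in> A. g a \<noteq> 0} \<union> {a \<in> A. f a \<noteq> 0} \<union> F"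
      have T': "finite T'" "T' \<subseteq> A" using g(1) f(1) F unfolding T'_def fin_supp_def by auto
      have Kg: "kalton A g = sum g T'" by (rule kalton_eq_sum) (use T' in \<open>auto simp: T'_def\<close>)
      have Kf: "kalton A f = sum f T'" by (rule kalton_eq_sum) (use T' in \<open>auto simp: T'_def\<close>)
      have ex: "\<exists>t. g a - f a = t *\<^sub>R a" if aA: "a \<in> A" for a
      proof -
        have "g \<in> PiE A rline" "f \<in> PiE A rline" using g(1) f(1) unfolding fin_supp_def by blast+
        then have "g a \<in> rline a" "f a \<in> rline a" using aA by (simp_all add: PiE_mem)
        then obtain s t where st: "g a = s *\<^sub>R a" "f a = t *\<^sub>R a" unfolding rline_def by blast
        have "g a - f a = (s - t) *\<^sub>R a" unfolding st by (simp add: scaleR_diff_left)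
        then show ?thesis by (rule exI)
      qed
      define r where "r a = (SOME t. g a - f a = t *\<^sub>R a)" for a
      have r: "\<forall>a\<in>A. g a - f a = r a *\<^sub>R a"
        unfolding r_def using someI_ex[OF ex] by blast
      define x1 where "x1 = (\<Sum>a\<in>F. g a - f a)"
      define x2 where "x2 = (\<Sum>a\<in>T' - F. g a - f a)"
      have "x1 \<in> V1" unfolding x1_def using W1(3)[rule_format, of "\<lambda>a. g a - f a"] g(2) by blast
      moreover have "x2 \<in> V2"
      proof -
        have "x2 = (\<Sum>a\<in>T' - F. r a *\<^sub>R a)" unfolding x2_def using r T'(2) by (intro sum.cong) auto
        also have "\<dots> \<in> V2"
          by (rule lem_span[OF V'(2,4,5) W3(3) F(3)]) (use T' in auto)
        finally show ?thesis .
      qed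
      ultimately have "x1 + x2 \<in> U0" using V(5) by blast
      moreover have "kalton A g = x1 + x2 + kalton A f"
      proof -
        have "sum g T' = sum f T' + (\<Sum>a\<in>T'. g a - f a)" by (simp add: sum_subtractf)
        also have "(\<Sum>a\<in>T'. g a - f a) = x2 + x1"
          unfolding x1_def x2_def using T' by (intro sum.subset_diff) (auto simp: T'_def)
        finally show ?thesis using Kg Kf by (simp add: algebra_simps)
      qed
      ultimately show "g \<in> {x \<in> fin_supp A rline. kalton A x \<in> U}" using g(1) unfolding U0_def by simp
    qed
    ultimately show "\<exists>T. openin (lS_top A) T \<and> f \<in> T \<and> T \<subseteq> {x \<in> fin_supp A rline. kalton A x \<in> U}"
      by blast
  qed
  then show ?thesis unfolding continuous_map_def tsp by auto
qed

end

theorem proposition10p1: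
  fixes A :: "'a::{real_vector,t2_space} set"
  assumes add_cont: "continuous_on UNIV (\<lambda>p::'a \<times> 'a. fst p + snd p)"
    and smult_cont: "continuous_on UNIV (\<lambda>p::real \<times> 'a. fst p *\<^sub>R snd p)"
    and A: "A \<subseteq> UNIV - {0}"
  shows "(continuous_map (lS_top A) euclidean (kalton A) \<longleftrightarrow>
          continuous_map (S_top A) euclidean (kalton A))
       \<and> (continuous_map (S_top A) euclidean (kalton A) \<longleftrightarrow> abs_cauchy_summable A)"
proof -
  have i_ii: "continuous_map (S_top A) euclidean (kalton A)" if "continuous_map (lS_top A) euclidean (kalton A)"
    unfolding S_top_eq using that by (rule continuous_map_from_subtopology)
  have ii_iii': "abs_cauchy_summable A" if "continuous_map (S_top A) euclidean (kalton A)"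
    using ii_iii[OF that A] .
  have iii_i': "continuous_map (lS_top A) euclidean (kalton A)" if "abs_cauchy_summable A"
    using iii_i[OF add_cont smult_cont that] .
  show ?thesis using i_ii ii_iii' iii_i' by blast
qed

end
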